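(* Let $\mathbf V$ be a variety of monoids satisfying the identities $xyx\approx xyx^2$ and $x^2y^2\approx y^2x^2$. (i) If $\mathbf E\nsubseteq\mathbf V$ then $\mathbf V\subseteq\mathbf K$. (ii) If $\mathbf F\nsubseteq\mathbf V$ then $\mathbf V\subseteq\mathbf Q$.
   Context: Varieties are monoid varieties (monoids as algebras with multiplication and a nullary operation for the identity element). The following varieties are defined by the listed identities: $\mathbf K$: $xyx\approx xyx^2$, $x^2y^2\approx y^2x^2$, $x^2y\approx x^2yx$; $\mathbf Q$: $xyx\approx xyx^2$, $x^2y^2\approx y^2x^2$, $xyx\approx x^2yx$; $\mathbf E$: $x^2y^2\approx y^2x^2$, $x^2\approx x^3$, $yx^2\approx xyx$; $\mathbf F$: $xyx\approx xyx^2$, $x^2y^2\approx y^2x^2$, $xyzxy\approx yxzxy$, $x^2y\approx x^2yx$. *)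

theory Defs
  imports Main
begin

text \<open>A monoid variety is represented (via Birkhoff's completeness theorem)
  by its equational theory: a fully invariant congruence on the free monoid of words.\<close>

type_synonym word = "nat list"

definition subst_word :: "(nat \<Rightarrow> word) \<Rightarrow> word \<Rightarrow> word" where
  "subst_word \<sigma> w = concat (map \<sigma> w)"

inductive_set eq_cl :: "(word \<times> word) set \<Rightarrow> (word \<times> word) set" for \<Sigma> where
  base: "(u, v) \<in> \<Sigma> \<Longrightarrow> (u, v) \<in> eq_cl \<Sigma>"
| refl: "(u, u) \<in> eq_cl \<Sigma>"
| sym: "(u, v) \<in> eq_cl \<Sigma> \<Longrightarrow> (v, u) \<in> eq_cl \<Sigma>"
| trans: "(u, v) \<in> eq_cl \<Sigma> \<Longrightarrow> (v, w) \<in> eq_cl \<Sigma> \<Longrightarrow> (u, w) \<in> eq_cl \<Sigma>"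
| ctx: "(u, v) \<in> eq_cl \<Sigma> \<Longrightarrow> (p @ u @ q, p @ v @ q) \<in> eq_cl \<Sigma>"
| subst: "(u, v) \<in> eq_cl \<Sigma> \<Longrightarrow> (subst_word \<sigma> u, subst_word \<sigma> v) \<in> eq_cl \<Sigma>"

definition is_variety :: "(word \<times> word) set \<Rightarrow> bool" where
  "is_variety V \<longleftrightarrow> eq_cl V = V"

definition var_def_by :: "(word \<times> word) set \<Rightarrow> (word \<times> word) set" where
  "var_def_by \<Sigma> = eq_cl \<Sigma>"

definition satisfies :: "(word \<times> word) set \<Rightarrow> word \<Rightarrow> word \<Rightarrow> bool" where
  "satisfies V u v \<longleftrightarrow> (u, v) \<in> V"

text \<open>Inclusion of varieties: V \<subseteq> W iff every identity of W holds in V.\<close>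
definition subvariety :: "(word \<times> word) set \<Rightarrow> (word \<times> word) set \<Rightarrow> bool" where
  "subvariety V W \<longleftrightarrow> W \<subseteq> V"

abbreviation "vx \<equiv> (0::nat)"
abbreviation "vy \<equiv> (1::nat)"
abbreviation "vz \<equiv> (2::nat)"

definition K_ids :: "(word \<times> word) set" where
  "K_ids = {([vx,vy,vx], [vx,vy,vx,vx]), ([vx,vx,vy,vy], [vy,vy,vx,vx]),
            ([vx,vx,vy], [vx,vx,vy,vx])}"

definition Q_ids :: "(word \<times> word) set" where
  "Q_ids = {([vx,vy,vx], [vx,vy,vx,vx]), ([vx,vx,vy,vy], [vy,vy,vx,vx]),
            ([vx,vy,vx], [vx,vx,vy,vx])}"

definition E_ids :: "(word \<times> word) set" where
  "E_ids = {([vx,vx,vy,vy], [vy,vy,vx,vx]), ([vx,vx], [vx,vx,vx]),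
            ([vy,vx,vx], [vx,vy,vx])}"

definition F_ids :: "(word \<times> word) set" where
  "F_ids = {([vx,vy,vx], [vx,vy,vx,vx]), ([vx,vx,vy,vy], [vy,vy,vx,vx]),
            ([vx,vy,vz,vx,vy], [vy,vx,vz,vx,vy]), ([vx,vx,vy], [vx,vx,vy,vx])}"

definition "varK = var_def_by K_ids"
definition "varQ = var_def_by Q_ids"
definition "varE = var_def_by E_ids"
definition "varF = var_def_by F_ids"

end

theory Submission
  imports Defs
begin

lemma subst_word_simps[simp]:
  "subst_word \<sigma> [] = []"
  "subst_word \<sigma> (x # w) = \<sigma> x @ subst_word \<sigma> w"
  "subst_word \<sigma> (u @ w) = subst_word \<sigma> u @ subst_word \<sigma> w"
  by (simp_all add: subst_word_def)

lemma eq_cl_mono_closed: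
  assumes "(a, b) \<in> eq_cl S" "S \<subseteq> R" "eq_cl R = R"
  shows "(a, b) \<in> R"
proof -
  have "(a, b) \<in> eq_cl R" using assms(1)
    by (induction rule: eq_cl.induct) (use assms(2) in \<open>auto intro: eq_cl.intros\<close>)
  then show ?thesis using assms(3) by simp
qed

lemma eq_cl_closed: "eq_cl (eq_cl S) = eq_cl S"
proof
  show "eq_cl (eq_cl S) \<subseteq> eq_cl S"
  proof
    fix p assume "p \<in> eq_cl (eq_cl S)"
    then obtain a b where p: "p = (a, b)" "(a, b) \<in> eq_cl (eq_cl S)" by (cases p) auto
    have "(a, b) \<in> eq_cl S" using p(2)
      by (induction rule: eq_cl.induct) (auto intro: eq_cl.intros)
    then show "p \<in> eq_cl S" using p by simp
  qed
qed (auto intro: eq_cl.base)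

locale eqth =
  fixes R :: "(word \<times> word) set"
  assumes closed: "eq_cl R = R"
begin

definition eqv (infix "\<simeq>" 50) where "u \<simeq> v \<longleftrightarrow> (u, v) \<in> R"

lemma inR: "(u, v) \<in> R \<Longrightarrow> u \<simeq> v" by (simp add: eqv_def)

lemma rrefl[simp, intro]: "u \<simeq> u"
  using eq_cl.refl[of u R] closed by (simp add: eqv_def)

lemma rsym: "u \<simeq> v \<Longrightarrow> v \<simeq> u"
  using eq_cl.sym[of u v R] closed by (simp add: eqv_def)

lemma rtrans[trans]: "u \<simeq> v \<Longrightarrow> v \<simeq> w \<Longrightarrow> u \<simeq> w"
  using eq_cl.trans[of u v R w] closed by (simp add: eqv_def)

lemma rctx: "u \<simeq> v \<Longrightarrow> p @ u @ q \<simeq> p @ v @ q"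
  using eq_cl.ctx[of u v R p q] closed by (simp add: eqv_def)

lemma rpre: "u \<simeq> v \<Longrightarrow> p @ u \<simeq> p @ v"
  using rctx[of u v p "[]"] by simp

lemma rsuf: "u \<simeq> v \<Longrightarrow> u @ q \<simeq> v @ q"
  using rctx[of u v "[]" q] by simp

lemma rsub: "u \<simeq> v \<Longrightarrow> subst_word \<sigma> u \<simeq> subst_word \<sigma> v"
  using eq_cl.subst[of u v R \<sigma>] closed by (simp add: eqv_def)

lemma rstep: "u \<simeq> v \<Longrightarrow> a = p @ u @ q \<Longrightarrow> b = p @ v @ q \<Longrightarrow> a \<simeq> b"
  using rctx by simp

lemma sub2: "(u, v) \<in> R \<Longrightarrow> subst_word (\<lambda>n. if n = 0 then s else if n = 1 then t else []) u
   \<simeq> subst_word (\<lambda>n. if n = 0 then s else if n = 1 then t else []) v"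
  using rsub inR by blast

lemma sub3: "(u, v) \<in> R \<Longrightarrow> subst_word (\<lambda>n. if n = 0 then s else if n = 1 then t else if n = 2 then z else []) u
   \<simeq> subst_word (\<lambda>n. if n = 0 then s else if n = 1 then t else if n = 2 then z else []) v"
  using rsub inR by blast

end


definition aft :: "nat \<Rightarrow> word \<Rightarrow> word" where
  "aft t w = tl (dropWhile (\<lambda>x. x \<noteq> t) w)"
definition bef :: "nat \<Rightarrow> word \<Rightarrow> word" where
  "bef t w = takeWhile (\<lambda>x. x \<noteq> t) w"

lemma aft_Cons[simp]: "aft t (x # w) = (if x = t then w else aft t w)"
  by (simp add: aft_def)
lemma aft_Nil[simp]: "aft t [] = []"
  by (simp add: aft_def)
lemma bef_Cons[simp]: "bef t (x # w) = (if x = t then [] else x # bef t w)"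
  by (simp add: bef_def)
lemma bef_Nil[simp]: "bef t [] = []"
  by (simp add: bef_def)

lemma aft_append: "aft t (w @ z) = (if t \<in> set w then aft t w @ z else aft t z)"
  by (induction w) auto
lemma bef_append: "bef t (w @ z) = (if t \<in> set w then bef t w else w @ bef t z)"
  by (induction w) auto
lemma set_aft: "set (aft t w) \<subseteq> set w"
  by (induction w) auto
lemma set_bef: "set (bef t w) \<subseteq> set w"
  by (induction w) auto
lemma t_notin_bef: "t \<notin> set (bef t w)"
  by (induction w) auto
lemma aft_filter: "P a \<Longrightarrow> aft a (filter P w) = filter P (aft a w)"
  by (induction w) auto
lemma count_filter: "count_list (filter P w) a = (if P a then count_list w a else 0)"
  by (induction w) auto

lemma count_zero_Nil: "(\<And>a. count_list w a = 0) \<Longrightarrow> w = []"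
  by (metis count_list_0_iff list.set_intros(1) neq_Nil_conv)

definition invE :: "word \<Rightarrow> word \<Rightarrow> bool" where
  "invE u v \<longleftrightarrow> (\<forall>a. min (count_list u a) 2 = min (count_list v a) 2) \<and>
     (\<forall>a b. a \<noteq> b \<longrightarrow> count_list u a = 1 \<longrightarrow> b \<in> set u \<longrightarrow>
        (b \<in> set (aft a u) \<longleftrightarrow> b \<in> set (aft a v)))"

locale Eth = eqth +
  assumes e1: "([0,0,1,1],[1,1,0,0]) \<in> R"
      and e2: "([0,0],[0,0,0]) \<in> R"
      and e3: "([1,0,0],[0,1,0]) \<in> R"
begin

lemma E1: "s @ s @ t @ t \<simeq> t @ t @ s @ s"
  using sub2[OF e1, of s t] by simp
lemma E2: "s @ s \<simeq> s @ s @ s"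
  using sub2[OF e2, of s t] by simp
lemma E3: "t @ s @ s \<simeq> s @ t @ s"
  using sub2[OF e3, of s t] by simp

lemma LB: "b \<in> set p \<Longrightarrow> p @ [b] \<simeq> filter (\<lambda>x. x \<noteq> b) p @ [b,b]"
proof (induction "length p" arbitrary: p rule: less_induct)
  case less
  obtain p1 p2 where p: "p = p1 @ b # p2" "b \<notin> set p2"
    using split_list_last[OF less.prems] by blast
  have "p @ [b] = p1 @ ([b] @ p2 @ [b]) @ []" using p by simp
  also have "\<dots> \<simeq> p1 @ (p2 @ [b] @ [b]) @ []"
    by (rule rctx, rule rsym, rule E3)
  also have "\<dots> = (p1 @ p2) @ [b] @ [b]" by simp
  also have "\<dots> \<simeq> (p1 @ p2) @ [b,b]"
    using rpre[OF rsym[OF E2[of "[b]"]], of "p1 @ p2"] by simp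
  finally have 1: "p @ [b] \<simeq> (p1 @ p2) @ [b, b]" .
  show ?case
  proof (cases "b \<in> set p1")
    case True
    then have "b \<in> set (p1 @ p2)" by simp
    moreover have "length (p1 @ p2) < length p" using p by simp
    ultimately have "(p1 @ p2) @ [b] \<simeq> filter (\<lambda>x. x \<noteq> b) (p1 @ p2) @ [b,b]"
      using less.hyps by blast
    then have "(p1 @ p2) @ [b] @ [b] \<simeq> filter (\<lambda>x. x \<noteq> b) (p1 @ p2) @ [b,b] @ [b]"
      using rsuf by fastforce
    also have "\<dots> \<simeq> filter (\<lambda>x. x \<noteq> b) (p1 @ p2) @ [b,b]"
      using rpre[OF rsym[OF E2[of "[b]"]], of "filter (\<lambda>x. x \<noteq> b) (p1 @ p2)"] by simp
    finally show ?thesis using 1 p rtrans by simp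
  next
    case False
    then have "filter (\<lambda>x. x \<noteq> b) p1 = p1" "filter (\<lambda>x. x \<noteq> b) p2 = p2"
      using p by (auto intro: filter_True)
    then have "filter (\<lambda>x. x \<noteq> b) p = p1 @ p2" using p by simp
    then show ?thesis using 1 by simp
  qed
qed

lemma LD: "c \<in> set v1 \<Longrightarrow> c \<notin> set v2 \<Longrightarrow> \<forall>b\<in>set v2. 2 \<le> count_list (v1 @ c # v2) b \<Longrightarrow>
   v1 @ c # v2 \<simeq> filter (\<lambda>x. x \<noteq> c) (v1 @ v2) @ [c,c]"
proof (induction "length v2" arbitrary: v1 v2 rule: less_induct)
  case less
  show ?case
  proof (cases v2 rule: rev_exhaust)
    case Nil
    then show ?thesis using LB[OF less.prems(1)] by simp
  next
    case (snoc r b)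
    have bc: "b \<noteq> c" using less.prems(2) snoc by auto
    have "2 \<le> count_list (v1 @ c # v2) b" using less.prems(3) snoc by auto
    then have "count_list (v1 @ c # r) b \<ge> 1" using snoc bc by simp
    then have bin: "b \<in> set (v1 @ c # r)"
      by (metis count_list_0_iff not_one_le_zero)
    let ?fb = "filter (\<lambda>x. x \<noteq> b)"
    let ?fc = "filter (\<lambda>x. x \<noteq> c)"
    have "v1 @ c # v2 = (v1 @ c # r) @ [b]" using snoc by simp
    also have "\<dots> \<simeq> ?fb (v1 @ c # r) @ [b,b]" by (rule LB[OF bin])
    also have "?fb (v1 @ c # r) = ?fb v1 @ c # ?fb r" using bc by simp
    finally have 1: "v1 @ c # v2 \<simeq> (?fb v1 @ c # ?fb r) @ [b,b]" by simp
    have "length (?fb r) < length v2" using snoc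
      by (simp add: le_imp_less_Suc)
    moreover have "c \<in> set (?fb v1)" using less.prems(1) bc by simp
    moreover have "c \<notin> set (?fb r)" using less.prems(2) snoc by simp
    moreover have "\<forall>d\<in>set (?fb r). 2 \<le> count_list (?fb v1 @ c # ?fb r) d"
    proof
      fix d assume d: "d \<in> set (?fb r)"
      then have "d \<noteq> b" "d \<in> set v2" using snoc by auto
      then have "2 \<le> count_list (v1 @ c # v2) d" using less.prems(3) by blast
      then show "2 \<le> count_list (?fb v1 @ c # ?fb r) d" using snoc \<open>d \<noteq> b\<close> bc
        by (auto simp: count_filter split: if_splits)
    qed
    ultimately have 2: "?fb v1 @ c # ?fb r \<simeq> ?fc (?fb v1 @ ?fb r) @ [c,c]"
      using less.hyps by blast
    define Y where "Y = ?fc (?fb v1 @ ?fb r)"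
    have "v1 @ c # v2 \<simeq> (Y @ [c,c]) @ [b,b]" using rtrans[OF 1 rsuf[OF 2]] Y_def by simp
    also have "\<dots> = Y @ [c] @ [c] @ [b] @ [b]" by simp
    also have "\<dots> \<simeq> Y @ [b] @ [b] @ [c] @ [c]" by (rule rpre, rule E1)
    finally have 3: "v1 @ c # v2 \<simeq> Y @ [b,b] @ [c,c]" by simp
    have bin2: "b \<in> set (?fc (v1 @ r))" using bin bc by auto
    have "?fc (v1 @ v2) @ [c,c] = ?fc (v1 @ r) @ [b] @ [c,c]" using snoc bc by simp
    also have "\<dots> \<simeq> (?fb (?fc (v1 @ r)) @ [b,b]) @ [c,c]"
      using rsuf[OF LB[OF bin2]] by simp
    also have "?fb (?fc (v1 @ r)) = Y"
    proof -
      have "\<And>w. ?fb (?fc w) = ?fc (?fb w)" by (induct_tac w) auto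
      then show ?thesis unfolding Y_def by simp
    qed
    finally have 4: "?fc (v1 @ v2) @ [c,c] \<simeq> Y @ [b,b] @ [c,c]" by simp
    show ?thesis using rtrans[OF 3 rsym[OF 4]] by simp
  qed
qed


lemma E_main: "invE u v \<Longrightarrow> u \<simeq> v"
proof (induction "length u" arbitrary: u v rule: less_induct)
  case less
  note inv = less.prems[unfolded invE_def]
  have cnt: "\<And>a. min (count_list u a) 2 = min (count_list v a) 2" using inv by blast
  have aftc: "\<And>a b. a \<noteq> b \<Longrightarrow> count_list u a = 1 \<Longrightarrow> b \<in> set u \<Longrightarrow>
        (b \<in> set (aft a u) \<longleftrightarrow> b \<in> set (aft a v))" using inv by blast
  have setuv: "\<And>b. b \<in> set u \<longleftrightarrow> b \<in> set v"
    by (metis cnt count_list_0_iff min_0L min_def zero_neq_numeral)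
  show ?case
  proof (cases u rule: rev_exhaust)
    case Nil
    then have "v = []" using setuv by (metis empty_iff last_in_set set_empty2)
    then show ?thesis using Nil by simp
  next
    case (snoc u1 c)
    show ?thesis
    proof (cases "c \<in> set u1")
      case False
      have cu: "count_list u c = 1" using snoc False by simp
      then have cv: "count_list v c = 1" using cnt[of c]
        by (metis min_def nat_le_linear numeral_le_one_iff one_add_one semiring_norm(69))
      then have "c \<in> set v" by (metis count_list_0_iff one_neq_zero)
      then obtain v1 v2 where v: "v = v1 @ c # v2" by (meson split_list)
      have cv12: "c \<notin> set v1" "c \<notin> set v2" using cv v by (auto simp: count_list_0_iff[symmetric])
      have v2: "v2 = []"
      proof (rule ccontr)
        assume "v2 \<noteq> []"
        then have lb: "last v2 \<in> set v2" by simp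
        then have "last v2 \<noteq> c" using cv12 by auto
        moreover have "last v2 \<in> set u" using setuv v lb by auto
        moreover have "aft c u = []" using snoc False by (simp add: aft_append)
        moreover have "aft c v = v2" using v cv12 by (simp add: aft_append)
        ultimately show False using aftc[of c "last v2"] cu lb by auto
      qed
      have "invE u1 v1"
        unfolding invE_def
      proof (intro conjI allI impI)
        fix a show "min (count_list u1 a) 2 = min (count_list v1 a) 2"
          using cnt[of a] snoc v v2 False cv12 by (cases "a = c") auto
      next
        fix a b assume ab: "a \<noteq> b" "count_list u1 a = 1" "b \<in> set u1"
        have "a \<in> set u1" using ab(2) by (metis count_list_0_iff one_neq_zero)
        then have ac: "a \<noteq> c" "b \<noteq> c" using ab(3) \<open>c \<notin> set u1\<close> by auto
        have cua: "count_list u a = 1" using ab ac snoc by simp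
        then have "count_list v a = 1" using cnt[of a]
          by (metis min_def nat_le_linear numeral_le_one_iff one_add_one semiring_norm(69))
        then have "count_list v1 a = 1" using v v2 ac by simp
        then have "a \<in> set v1" by (metis count_list_0_iff one_neq_zero)
        moreover have "a \<in> set u1" using ab by (metis count_list_0_iff one_neq_zero)
        ultimately show "b \<in> set (aft a u1) \<longleftrightarrow> b \<in> set (aft a v1)"
          using aftc[of a b] ab cua snoc v v2 ac by (auto simp: aft_append)
      qed
      moreover have "length u1 < length u" using snoc by simp
      ultimately have "u1 \<simeq> v1" using less.hyps by blast
      then show ?thesis using snoc v v2 rsuf by simp
    next
      case True
      let ?fc = "filter (\<lambda>x. x \<noteq> c)"
      have 1: "u \<simeq> ?fc u @ [c,c]" using LB[OF True] snoc by simp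
      have "count_list u1 c \<noteq> 0" using True by (simp add: count_list_0_iff)
      then have "count_list u c \<ge> 2" using snoc by simp
      then have cv2: "count_list v c \<ge> 2" using cnt[of c] by linarith
      then have "c \<in> set v" by (metis count_list_0_iff not_numeral_le_zero)
      then obtain v1 v2 where v: "v = v1 @ c # v2" "c \<notin> set v2" by (meson split_list_last)
      have "count_list v1 c \<ge> 1" using cv2 v by simp
      then have cv1: "c \<in> set v1" by (metis count_list_0_iff not_one_le_zero)
      have mult: "\<forall>b\<in>set v2. 2 \<le> count_list (v1 @ c # v2) b"
      proof
        fix b assume b: "b \<in> set v2"
        show "2 \<le> count_list (v1 @ c # v2) b"
        proof (rule ccontr)
          assume "\<not> 2 \<le> count_list (v1 @ c # v2) b"
          moreover have "count_list v2 b \<noteq> 0" using b by (simp add: count_list_0_iff)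
          then have "count_list v b \<ge> 1" using v by simp
          ultimately have cvb: "count_list v b = 1" using v by simp
          have bc: "b \<noteq> c" using b v by auto
          have cub: "count_list u b = 1" using cnt[of b] cvb
            by (metis min_def nat_le_linear numeral_le_one_iff one_add_one semiring_norm(69))
          then have "count_list u1 b = 1" using snoc bc by simp
          then have bu1: "b \<in> set u1" by (metis count_list_0_iff one_neq_zero)
          have c1: "c \<in> set (aft b u)" using snoc bu1 by (simp add: aft_append)
          have "count_list v1 b = 0" using cvb v \<open>count_list v2 b \<noteq> 0\<close> bc
            by simp
          then have "b \<notin> set v1" by (simp add: count_list_0_iff)
          then have "aft b v = aft b v2" using v bc by (simp add: aft_append)
          then have "c \<notin> set (aft b v)" using v(2) set_aft[of b v2] by auto
          with c1 show False using aftc[of b c] bc cub snoc by simp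
        qed
      qed
      have 2: "v \<simeq> ?fc v @ [c,c]" using LD[OF cv1 v(2) mult] v by simp
      have "invE (?fc u) (?fc v)"
        unfolding invE_def
      proof (intro conjI allI impI)
        fix a show "min (count_list (?fc u) a) 2 = min (count_list (?fc v) a) 2"
          using cnt[of a] by (simp add: count_filter)
      next
        fix a b assume ab: "a \<noteq> b" "count_list (?fc u) a = 1" "b \<in> set (?fc u)"
        then have ac: "a \<noteq> c" "b \<noteq> c" "count_list u a = 1" "b \<in> set u"
          by (auto simp: count_filter split: if_splits)
        show "b \<in> set (aft a (?fc u)) \<longleftrightarrow> b \<in> set (aft a (?fc v))"
          using aftc[of a b] ab ac by (simp add: aft_filter)
      qed
      moreover have "length (?fc u) < length u" using snoc by (simp add: le_imp_less_Suc)
      ultimately have "?fc u \<simeq> ?fc v" using less.hyps by blast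
      then have "?fc u @ [c,c] \<simeq> ?fc v @ [c,c]" by (rule rsuf)
      then show ?thesis using rtrans[OF 1 rtrans[OF _ rsym[OF 2]]] by blast
    qed
  qed
qed

end

lemma proj1: "subst_word (\<lambda>n. if n = a then [x] else []) w = replicate (count_list w a) x"
  by (induction w) auto

lemma proj0: "a \<notin> set w \<Longrightarrow> subst_word (\<lambda>n. if n = b then [0] else if n = a then [1] else []) w
   = replicate (count_list w b) 0"
  by (induction w) auto

lemma proj2:
  assumes "count_list w a = 1" "a \<noteq> b"
  shows "subst_word (\<lambda>n. if n = b then [0] else if n = a then [1] else []) w
   = replicate (count_list (bef a w) b) 0 @ [1] @ replicate (count_list (aft a w) b) 0"
    "count_list (bef a w) b + count_list (aft a w) b = count_list w b"
proof -
  have "a \<in> set w" using assms(1) by (metis count_list_0_iff one_neq_zero)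
  then obtain w1 w2 where w: "w = w1 @ a # w2" "a \<notin> set w1" by (meson split_list_first)
  then have "a \<notin> set w2" using assms(1) by (simp add: count_list_0_iff[symmetric])
  then show "subst_word (\<lambda>n. if n = b then [0] else if n = a then [1] else []) w
   = replicate (count_list (bef a w) b) 0 @ [1] @ replicate (count_list (aft a w) b) 0"
    "count_list (bef a w) b + count_list (aft a w) b = count_list w b"
    using w assms(2) by (simp_all add: proj0 bef_append aft_append)
qed

locale dvar = eqth +
  assumes h1: "([0,1,0],[0,1,0,0]) \<in> R"
      and h2: "([0,0,1,1],[1,1,0,0]) \<in> R"
begin

lemma sqx: "[x,x] \<simeq> [x,x,x]"
  using sub2[OF h1, of "[x]" "[]"] by simp

lemma xyx: "x # t @ [x] \<simeq> x # t @ [x,x]"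
  using sub2[OF h1, of "[x]" t] by simp

lemma vsq: "2 \<le> k \<Longrightarrow> replicate k x \<simeq> [x,x]"
proof (induction k rule: dec_induct)
  case base then show ?case by (simp add: numeral_2_eq_2)
next
  case (step n)
  have "replicate (Suc n) x = [x] @ replicate n x" by simp
  also have "\<dots> \<simeq> [x] @ [x,x]" by (rule rpre, rule step.IH)
  also have "\<dots> \<simeq> [x,x]" using rsym[OF sqx] by simp
  finally show ?case .
qed

lemma vxyx: "1 \<le> l \<Longrightarrow> x # t @ replicate l x \<simeq> x # t @ [x]"
proof (induction l rule: dec_induct)
  case base then show ?case by simp
next
  case (step n)
  have "x # t @ replicate (Suc n) x = (x # t @ replicate n x) @ [x]"
    by (simp add: replicate_append_same[symmetric])
  also have "\<dots> \<simeq> (x # t @ [x]) @ [x]" by (rule rsuf, rule step.IH)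
  also have "\<dots> \<simeq> x # t @ [x]" using rsym[OF xyx] by simp
  finally show ?case .
qed

lemma collapse: assumes "[0] \<simeq> []" shows "u \<simeq> v"
proof -
  have 1: "[x] \<simeq> []" for x using rsub[OF assms, of "\<lambda>n. [x]"] by simp
  have "w \<simeq> []" for w
  proof (induction w)
    case (Cons x w)
    have "x # w = [x] @ w" by simp
    also have "\<dots> \<simeq> [] @ w" by (rule rsuf, rule 1)
    also have "\<dots> \<simeq> []" using Cons by simp
    finally show ?case .
  qed simp
  then show ?thesis using rsym rtrans by blast
qed

lemma T2_of_C: assumes "[1,0] \<simeq> [0,1]" shows "[0,1,0] \<simeq> [0,0,1,0]"
proof -
  have "[0,1,0] = [0] @ [1,0]" by simp
  also have "\<dots> \<simeq> [0] @ [0,1]" by (rule rpre, rule assms)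
  also have "\<dots> = [0,0,1]" by simp
  also have "\<dots> \<simeq> [0,0,0] @ [1]" using rsuf[OF sqx[of 0], of "[1]"] by simp
  also have "\<dots> = [0,0] @ [0,1]" by simp
  also have "\<dots> \<simeq> [0,0] @ [1,0]" by (rule rpre, rule rsym, rule assms)
  finally show ?thesis by simp
qed

lemma T_of_C: assumes "[1,0] \<simeq> [0,1]" shows "[0,0,1] \<simeq> [0,0,1,0]"
proof -
  have "[0,0,1] \<simeq> [0,0,0] @ [1]" using rsuf[OF sqx[of 0], of "[1]"] by simp
  also have "\<dots> = [0,0] @ [0,1]" by simp
  also have "\<dots> \<simeq> [0,0] @ [1,0]" by (rule rpre, rule rsym, rule assms)
  finally show ?thesis by simp
qed

lemma idem: assumes "[0] \<simeq> [0,0]" shows "[0,0,1] \<simeq> [0,0,1,0]" "[0,1,0] \<simeq> [0,0,1,0]"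
proof -
  have y: "[1] \<simeq> [1,1]" using rsub[OF assms, of "\<lambda>n. [1]"] by simp
  have "[0,1] = [0] @ [1]" by simp
  also have "\<dots> \<simeq> [0,0] @ [1]" by (rule rsuf, rule assms)
  also have "\<dots> \<simeq> [0,0] @ [1,1]" by (rule rpre, rule y)
  also have "\<dots> \<simeq> [1,1,0,0]" using inR[OF h2] by simp
  also have "\<dots> = [1] @ [1,0,0]" by simp
  also have "\<dots> \<simeq> [1] @ [1,0]"
  proof -
    have a: "[1,0,0] \<simeq> [1,0]" using rpre[OF rsym[OF assms], of "[1]"] by simp
    show ?thesis by (rule rpre, rule a)
  qed
  also have "\<dots> = [1,1] @ [0]" by simp
  also have "\<dots> \<simeq> [1] @ [0]" by (rule rsuf, rule rsym, rule y)
  finally have C: "[1,0] \<simeq> [0,1]" using rsym by simp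
  show "[0,0,1] \<simeq> [0,0,1,0]" by (rule T_of_C[OF C])
  show "[0,1,0] \<simeq> [0,0,1,0]" by (rule T2_of_C[OF C])
qed

lemma stat_aux: assumes "replicate m 0 \<simeq> replicate k 0" "min m 2 < min k 2"
  shows "[0,0,1] \<simeq> [0,0,1,0] \<and> [0,1,0] \<simeq> [0,0,1,0]"
proof (cases "m = 0")
  case True
  then have k: "k \<ge> 1" using assms(2) by simp
  have 0: "[] \<simeq> replicate k 0" using assms True by simp
  note 0
  also have "replicate k 0 = replicate k 0 @ []" by simp
  also have "\<dots> \<simeq> replicate k 0 @ replicate k 0" by (rule rpre, rule 0)
  also have "\<dots> = replicate (k + k) 0" by (simp add: replicate_add)
  also have "\<dots> \<simeq> [0,0]" by (rule vsq) (use k in simp)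
  finally have 1: "[] \<simeq> [0,0]" .
  have "[0] = [0] @ []" by simp
  also have "\<dots> \<simeq> [0] @ [0,0]" by (rule rpre, rule 1)
  also have "\<dots> \<simeq> [0,0]" using rsym[OF sqx[of 0]] by simp
  also have "\<dots> \<simeq> []" by (rule rsym, rule 1)
  finally show ?thesis using collapse by blast
next
  case False
  then have "m = 1" "k \<ge> 2" using assms(2) by auto
  then have "[0] \<simeq> [0,0]" using assms(1) vsq[of k 0] rtrans by simp
  then show ?thesis using idem by blast
qed

lemma stat: assumes "replicate m 0 \<simeq> replicate k 0" "min m 2 \<noteq> min k 2"
  shows "[0,0,1] \<simeq> [0,0,1,0] \<and> [0,1,0] \<simeq> [0,0,1,0]"
proof (cases "min m 2 < min k 2")
  case True then show ?thesis using stat_aux assms by blast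
next
  case False
  then have "min k 2 < min m 2" using assms(2) by linarith
  then show ?thesis using stat_aux[OF rsym[OF assms(1)]] by blast
qed

end

context dvar begin

lemma r2: "2 \<le> i \<Longrightarrow> replicate i 0 @ w \<simeq> [0,0] @ w"
  by (rule rsuf, rule vsq)
lemma rl: "1 \<le> l \<Longrightarrow> [0,1] @ replicate l 0 \<simeq> [0,1,0]"
  using vxyx[of l 0 "[1]"] by simp
lemma rl2: "2 \<le> l \<Longrightarrow> [1] @ replicate l 0 \<simeq> [1,0,0]"
  using rpre[OF vsq[of l 0], of "[1]"] by simp
lemma s3: "[0,0,0] @ w \<simeq> [0,0] @ w"
  by (rule rsuf, rule rsym, rule sqx)

lemma KE:
  assumes A: "replicate i 0 @ [1] \<simeq> replicate k 0 @ [1] @ replicate l 0"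
    and i: "1 \<le> i" and l: "1 \<le> l" and m: "min i 2 = min (k+l) 2"
  shows "[0,0,1] \<simeq> [0,0,1,0]"
proof (cases "i = 1")
  case True
  then have "k = 0" "l = 1" using m l by auto
  then have "[0,1] \<simeq> [1,0]" using A True by simp
  then show ?thesis using T_of_C rsym by blast
next
  case False
  then have i2: "2 \<le> i" using i by simp
  then have kl: "2 \<le> k + l" using m by simp
  have L: "[0,0,1] \<simeq> replicate k 0 @ [1] @ replicate l 0"
    using rtrans[OF rsym[OF r2[OF i2, of "[1]"]] A] by simp
  consider "k = 0" | "k = 1" | "2 \<le> k" by linarith
  then show ?thesis
  proof cases
    case 1
    then have "[0,0,1] \<simeq> [1,0,0]" using L rl2[of l] kl rtrans by simp
    note Y = this
    have "[0,0,1,0] = [0,0,1] @ [0]" by simp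
    also have "\<dots> \<simeq> [1,0,0] @ [0]" by (rule rsuf, rule Y)
    also have "\<dots> = [1] @ [0,0,0] @ []" by simp
    also have "\<dots> \<simeq> [1] @ [0,0] @ []" by (rule rctx, rule rsym, rule sqx)
    also have "\<dots> \<simeq> [0,0,1]" using rsym[OF Y] by simp
    finally show ?thesis by (rule rsym)
  next
    case 2
    then have Y: "[0,0,1] \<simeq> [0,1,0]" using L rl[OF l] rtrans by simp
    have "[0,0,1] \<simeq> [0,0,0] @ [1]" using rsym[OF s3[of "[1]"]] by simp
    also have "\<dots> = [0] @ [0,0,1]" by simp
    also have "\<dots> \<simeq> [0] @ [0,1,0]" by (rule rpre, rule Y)
    finally show ?thesis by simp
  next
    case 3
    have "replicate k 0 @ [1] @ replicate l 0 \<simeq> [0,0] @ [1] @ replicate l 0" by (rule r2[OF 3])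
    also have "\<dots> = [0] @ ([0,1] @ replicate l 0)" by simp
    also have "\<dots> \<simeq> [0] @ [0,1,0]" by (rule rpre, rule rl[OF l])
    finally show ?thesis using L rtrans by simp
  qed
qed

lemma KF:
  assumes A: "replicate i 0 @ [1] @ replicate j 0 \<simeq> replicate k 0 @ [1] @ replicate l 0"
    and m: "min (i+j) 2 = min (k+l) 2" and lt: "min i 2 < min k 2"
  shows "[0,1,0] \<simeq> [0,0,1,0]"
proof -
  have x1: "[0,1,0] \<simeq> [0,1,0,0]" using inR[OF h1] by simp
  consider "i = 0" "k = 1" | "i = 0" "2 \<le> k" | "i = 1" "2 \<le> k" using lt by linarith
  then show ?thesis
  proof cases
    case 1
    show ?thesis
    proof (cases "l = 0")
      case True
      then have "j = 1" using m 1 by simp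
      then have "[1,0] \<simeq> [0,1]" using A 1 True by simp
      then show ?thesis by (rule T2_of_C)
    next
      case False
      then have j: "2 \<le> j" using m 1 by simp
      have "[1,0,0] \<simeq> [1] @ replicate j 0" using rsym[OF rl2[OF j]] .
      also have "\<dots> \<simeq> [0,1] @ replicate l 0" using A 1 by simp
      also have "\<dots> \<simeq> [0,1,0]" using rl False by simp
      finally have Y: "[1,0,0] \<simeq> [0,1,0]" .
      note x1
      also have "[0,1,0,0] = [0] @ [1,0,0]" by simp
      also have "\<dots> \<simeq> [0] @ [0,1,0]" by (rule rpre, rule Y)
      finally show ?thesis by simp
    qed
  next
    case 2
    then have j: "2 \<le> j" using m by simp
    have "[1,0,0] \<simeq> [1] @ replicate j 0" using rsym[OF rl2[OF j]] .
    also have "\<dots> \<simeq> replicate k 0 @ [1] @ replicate l 0" using A 2 by simp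
    also have "\<dots> \<simeq> [0,0] @ [1] @ replicate l 0" by (rule r2, rule 2(2))
    finally have Y0: "[1,0,0] \<simeq> [0,0] @ [1] @ replicate l 0" .
    show ?thesis
    proof (cases "l = 0")
      case True
      then have Y: "[1,0,0] \<simeq> [0,0,1]" using Y0 by simp
      note x1
      also have "[0,1,0,0] = [0] @ [1,0,0]" by simp
      also have "\<dots> \<simeq> [0] @ [0,0,1]" by (rule rpre, rule Y)
      also have "\<dots> = [0,0,0] @ [1]" by simp
      also have "\<dots> \<simeq> [0,0] @ [1]" by (rule s3)
      finally have P: "[0,1,0] \<simeq> [0,0,1]" by simp
      have "[0,0,1,0] = [0,0,1] @ [0]" by simp
      also have "\<dots> \<simeq> [1,0,0] @ [0]" by (rule rsuf, rule rsym, rule Y)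
      also have "\<dots> = [1] @ [0,0,0] @ []" by simp
      also have "\<dots> \<simeq> [1] @ [0,0] @ []" by (rule rctx, rule rsym, rule sqx)
      also have "\<dots> \<simeq> [0,0,1]" using Y by simp
      finally have Q: "[0,0,1,0] \<simeq> [0,0,1]" .
      show ?thesis using rtrans[OF P rsym[OF Q]] .
    next
      case False
      have "[0,0] @ [1] @ replicate l 0 = [0] @ ([0,1] @ replicate l 0)" by simp
      also have "\<dots> \<simeq> [0] @ [0,1,0]" by (rule rpre, rule rl) (use False in simp)
      finally have Y: "[1,0,0] \<simeq> [0,0,1,0]" using Y0 rtrans by simp
      note x1
      also have "[0,1,0,0] = [0] @ [1,0,0]" by simp
      also have "\<dots> \<simeq> [0] @ [0,0,1,0]" by (rule rpre, rule Y)
      also have "\<dots> = [0,0,0] @ [1,0]" by simp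
      also have "\<dots> \<simeq> [0,0] @ [1,0]" by (rule s3)
      finally show ?thesis by simp
    qed
  next
    case 3
    then have j: "1 \<le> j" using m by simp
    have "[0,1,0] \<simeq> [0,1] @ replicate j 0" using rsym[OF rl[OF j]] .
    also have "\<dots> \<simeq> replicate k 0 @ [1] @ replicate l 0" using A 3 by simp
    also have "\<dots> \<simeq> [0,0] @ [1] @ replicate l 0" by (rule r2, rule 3(2))
    finally have Y0: "[0,1,0] \<simeq> [0,0] @ [1] @ replicate l 0" .
    show ?thesis
    proof (cases "l = 0")
      case True
      then have Y: "[0,1,0] \<simeq> [0,0,1]" using Y0 by simp
      have "[0,0,1,0] = [0] @ [0,1,0]" by simp
      also have "\<dots> \<simeq> [0] @ [0,0,1]" by (rule rpre, rule Y)
      also have "\<dots> = [0,0,0] @ [1]" by simp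
      also have "\<dots> \<simeq> [0,0] @ [1]" by (rule s3)
      also have "\<dots> \<simeq> [0,1,0]" using rsym[OF Y] by simp
      finally show ?thesis by (rule rsym)
    next
      case False
      have "[0,0] @ [1] @ replicate l 0 = [0] @ ([0,1] @ replicate l 0)" by simp
      also have "\<dots> \<simeq> [0] @ [0,1,0]" by (rule rpre, rule rl) (use False in simp)
      finally show ?thesis using Y0 rtrans by simp
    qed
  qed
qed

end

definition invF :: "word \<Rightarrow> word \<Rightarrow> bool" where
  "invF u v \<longleftrightarrow> (\<forall>a. min (count_list u a) 2 = min (count_list v a) 2) \<and>
     (\<forall>t a. count_list u t = 1 \<longrightarrow> min (count_list (bef t u) a) 2 = min (count_list (bef t v) a) 2)"

lemma min2_1: "min (count_list u a) 2 = min (count_list v a) (2::nat) \<Longrightarrow> count_list u a = 1 \<Longrightarrow> count_list v a = 1"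
  by (simp add: min_def split: if_splits)

lemma min2_in: "min (count_list u a) 2 = min (count_list v a) (2::nat) \<Longrightarrow> a \<in> set u \<Longrightarrow> a \<in> set v"
proof -
  assume m: "min (count_list u a) 2 = min (count_list v a) (2::nat)" and a: "a \<in> set u"
  then have "count_list u a \<noteq> 0" by (simp add: count_list_0_iff)
  then have "count_list v a \<noteq> 0" using m by (auto simp: min_def split: if_splits)
  then show ?thesis by (simp add: count_list_0_iff)
qed

context dvar begin

abbreviation "sab b a \<equiv> (\<lambda>n::nat. if n = b then [0::nat] else if n = a then [1] else [])"

lemma VE_aux:
  assumes "w1 \<simeq> w2" "count_list w1 a = 1" "count_list w2 a = 1" "a \<noteq> b"
    "min (count_list w1 b) 2 = min (count_list w2 b) 2" "b \<in> set w1"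
    "b \<notin> set (aft a w1)" "b \<in> set (aft a w2)"
  shows "[0,0,1] \<simeq> [0,0,1,0]"
proof -
  note p1 = proj2[OF assms(2) assms(4)] and p2 = proj2[OF assms(3) assms(4)]
  have "subst_word (sab b a) w1 \<simeq> subst_word (sab b a) w2" by (rule rsub, rule assms(1))
  then have A: "replicate (count_list (bef a w1) b) 0 @ [1] @ replicate (count_list (aft a w1) b) 0
     \<simeq> replicate (count_list (bef a w2) b) 0 @ [1] @ replicate (count_list (aft a w2) b) 0"
    using p1(1) p2(1) by simp
  have z: "count_list (aft a w1) b = 0" using assms(7) by (simp add: count_list_0_iff)
  have l: "1 \<le> count_list (aft a w2) b" using assms(8)
    by (metis count_list_0_iff less_one not_le)
  have i: "1 \<le> count_list w1 b" using assms(6) by (metis count_list_0_iff less_one not_le)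
  show ?thesis
    apply (rule KE[of "count_list (bef a w1) b" "count_list (bef a w2) b" "count_list (aft a w2) b"])
    using A z l i p1(2) p2(2) assms(5) by simp_all
qed

lemma VE: assumes "u \<simeq> v" "\<not> invE u v" shows "[0,0,1] \<simeq> [0,0,1,0]"
proof (cases "\<forall>a. min (count_list u a) 2 = min (count_list v a) 2")
  case False
  then obtain a where a: "min (count_list u a) 2 \<noteq> min (count_list v a) 2" by blast
  have "subst_word (\<lambda>n. if n = a then [0] else []) u \<simeq> subst_word (\<lambda>n. if n = a then [0] else []) v"
    by (rule rsub, rule assms(1))
  then have "replicate (count_list u a) 0 \<simeq> replicate (count_list v a) 0" by (simp add: proj1)
  from stat[OF this a] show ?thesis by (rule conjunct1)
next
  case True
  have "\<not> (\<forall>a b. a \<noteq> b \<longrightarrow> count_list u a = 1 \<longrightarrow> b \<in> set u \<longrightarrow>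
        (b \<in> set (aft a u) \<longleftrightarrow> b \<in> set (aft a v)))"
  proof
    assume H: "\<forall>a b. a \<noteq> b \<longrightarrow> count_list u a = 1 \<longrightarrow> b \<in> set u \<longrightarrow>
        (b \<in> set (aft a u) \<longleftrightarrow> b \<in> set (aft a v))"
    have "invE u v" unfolding invE_def using True H by (rule conjI)
    then show False using assms(2) by contradiction
  qed
  then obtain a b where ab: "a \<noteq> b" "count_list u a = 1" "b \<in> set u"
     "\<not> (b \<in> set (aft a u) \<longleftrightarrow> b \<in> set (aft a v))"
    by auto
  have va: "count_list v a = 1" using min2_1[OF True[rule_format, of a] ab(2)] .
  have "b \<in> set v" using min2_in[OF True[rule_format, of b] ab(3)] .
  note bv = this
  have m: "min (count_list u b) 2 = min (count_list v b) 2" using True[rule_format, of b] .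
  show ?thesis
  proof (cases "b \<in> set (aft a u)")
    case True
    then have "b \<notin> set (aft a v)" using ab(4) by blast
    then show ?thesis using VE_aux[OF rsym[OF assms(1)] va ab(2) ab(1) m[symmetric] bv] True by blast
  next
    case False
    then have "b \<in> set (aft a v)" using ab(4) by blast
    then show ?thesis using VE_aux[OF assms(1) ab(2) va ab(1) m ab(3) False] by blast
  qed
qed

lemma VF_aux:
  assumes "w1 \<simeq> w2" "count_list w1 t = 1" "count_list w2 t = 1" "t \<noteq> a"
    "min (count_list w1 a) 2 = min (count_list w2 a) 2"
    "min (count_list (bef t w1) a) 2 < min (count_list (bef t w2) a) 2"
  shows "[0,1,0] \<simeq> [0,0,1,0]"
proof -
  note p1 = proj2[OF assms(2) assms(4)] and p2 = proj2[OF assms(3) assms(4)]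
  have "subst_word (sab a t) w1 \<simeq> subst_word (sab a t) w2" by (rule rsub, rule assms(1))
  then have A: "replicate (count_list (bef t w1) a) 0 @ [1] @ replicate (count_list (aft t w1) a) 0
     \<simeq> replicate (count_list (bef t w2) a) 0 @ [1] @ replicate (count_list (aft t w2) a) 0"
    using p1(1) p2(1) by simp
  show ?thesis
    apply (rule KF[OF A])
    using p1(2) p2(2) assms(5,6) by simp_all
qed

lemma VF: assumes "u \<simeq> v" "\<not> invF u v" shows "[0,1,0] \<simeq> [0,0,1,0]"
proof (cases "\<forall>a. min (count_list u a) 2 = min (count_list v a) 2")
  case False
  then obtain a where a: "min (count_list u a) 2 \<noteq> min (count_list v a) 2" by blast
  have "subst_word (\<lambda>n. if n = a then [0] else []) u \<simeq> subst_word (\<lambda>n. if n = a then [0] else []) v"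
    by (rule rsub, rule assms(1))
  then have "replicate (count_list u a) 0 \<simeq> replicate (count_list v a) 0" by (simp add: proj1)
  from stat[OF this a] show ?thesis by (rule conjunct2)
next
  case True
  have "\<not> (\<forall>t a. count_list u t = 1 \<longrightarrow> min (count_list (bef t u) a) 2 = min (count_list (bef t v) a) 2)"
  proof
    assume H: "\<forall>t a. count_list u t = 1 \<longrightarrow> min (count_list (bef t u) a) 2 = min (count_list (bef t v) a) 2"
    have "invF u v" unfolding invF_def using True H by (rule conjI)
    then show False using assms(2) by contradiction
  qed
  then obtain t a where ta: "count_list u t = 1"
     "min (count_list (bef t u) a) 2 \<noteq> min (count_list (bef t v) a) 2"
    by auto
  have vt: "count_list v t = 1" using min2_1[OF True[rule_format, of t] ta(1)] .
  have "t \<noteq> a" using ta(2) t_notin_bef[of t u] t_notin_bef[of t v] by auto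
  note ne = this
  have m: "min (count_list u a) 2 = min (count_list v a) 2" using True[rule_format, of a] .
  show ?thesis
  proof (cases "min (count_list (bef t u) a) 2 < min (count_list (bef t v) a) 2")
    case True
    then show ?thesis using VF_aux[OF assms(1) ta(1) vt ne m] by blast
  next
    case False
    then have "min (count_list (bef t v) a) 2 < min (count_list (bef t u) a) 2" using ta(2) by linarith
    then show ?thesis using VF_aux[OF rsym[OF assms(1)] vt ta(1) ne m[symmetric]] by blast
  qed
qed

end

lemma count_pos[simp]: "0 < count_list w y \<longleftrightarrow> y \<in> set w"
  using count_list_0_iff[of w y] by auto

fun tr :: "word \<Rightarrow> word \<Rightarrow> word" where
  "tr s [] = []"
| "tr s (x # w) = (if 2 \<le> count_list s x then tr s w else x # tr (s @ [x]) w)"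

lemma count_tr: "count_list (tr s w) a = min (count_list w a) (2 - count_list s a)"
  by (induction s w rule: tr.induct) auto

lemma set_tr: "set (tr s w) \<subseteq> set w"
  by (induction s w rule: tr.induct) auto

lemma tr_append: "tr s (w1 @ w2) = tr s w1 @ tr (s @ tr s w1) w2"
  by (induction s w1 rule: tr.induct) auto

lemma bef_tr: assumes "count_list w t = 1" shows "bef t (tr [] w) = tr [] (bef t w)"
proof -
  have "t \<in> set w" using assms by (metis count_list_0_iff one_neq_zero)
  then obtain w1 w2 where w: "w = w1 @ t # w2" "t \<notin> set w1" by (meson split_list_first)
  have nt: "t \<notin> set (tr [] w1)" using w(2) set_tr by blast
  then have "count_list (tr [] w1) t = 0" by simp
  then have "tr [] w = tr [] w1 @ t # tr (tr [] w1 @ [t]) w2" using w by (simp add: tr_append)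
  then show ?thesis using w nt by (simp add: bef_append)
qed

locale Fth = eqth +
  assumes f1: "([0,1,0],[0,1,0,0]) \<in> R"
      and f2: "([0,0,1,1],[1,1,0,0]) \<in> R"
      and f3: "([0,1,2,0,1],[1,0,2,0,1]) \<in> R"
      and f4: "([0,0,1],[0,0,1,0]) \<in> R"
begin

lemma FD: assumes "x \<in> set p" shows "p @ x # q \<simeq> p @ x # x # q"
proof -
  obtain p1 p2 where p: "p = p1 @ x # p2" using assms by (meson split_list)
  have "x # p2 @ [x] \<simeq> x # p2 @ [x, x]" using sub2[OF f1, of "[x]" p2] by simp
  then show ?thesis by (rule rstep[where p=p1 and q=q]) (simp_all add: p)
qed

lemma FI: assumes "x \<in> set p" shows "p @ x # r @ q \<simeq> p @ x # r @ x # q"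
proof -
  have "p @ x # r @ q \<simeq> p @ x # x # r @ q" by (rule FD[OF assms])
  also have "\<dots> \<simeq> p @ x # x # r @ x # q"
  proof -
    have "x # x # r \<simeq> x # x # r @ [x]" using sub2[OF f4, of "[x]" r] by simp
    then show ?thesis by (rule rstep[where p=p and q=q]) simp_all
  qed
  also have "\<dots> \<simeq> p @ x # r @ x # q" by (rule rsym, rule FD[OF assms])
  finally show ?thesis .
qed

lemma FIend: assumes "2 \<le> count_list w x" shows "w \<simeq> w @ [x]"
proof -
  have "x \<in> set w" using assms by (metis count_list_0_iff not_numeral_le_zero)
  then obtain p r where w: "w = p @ x # r" "x \<notin> set r" by (meson split_list_last)
  then have "count_list p x \<noteq> 0" using assms by simp
  then have "x \<in> set p" by (simp add: count_list_0_iff)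
  from FI[OF this, of r "[]"] show ?thesis using w by simp
qed

lemma FDel: assumes "2 \<le> count_list p x" shows "p @ x # q \<simeq> p @ q"
proof -
  have "x \<in> set p" using assms by (metis count_list_0_iff not_numeral_le_zero)
  then obtain p1 r where w: "p = p1 @ x # r" "x \<notin> set r" by (meson split_list_last)
  then have "count_list p1 x \<noteq> 0" using assms by simp
  then have "x \<in> set p1" by (simp add: count_list_0_iff)
  from rsym[OF FI[OF this, of r q]] show ?thesis using w by simp
qed

lemma Fsw: "[x,y] @ W @ [x,y] \<simeq> [y,x] @ W @ [x,y]"
  using sub3[OF f3, of "[x]" "[y]" W] by simp
lemma Fsw2: "[x,y] @ W @ [y,x] \<simeq> [y,x] @ W @ [y,x]"
  using rsym[OF sub3[OF f3, of "[y]" "[x]" W]] by simp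
lemma Fsq: "[x,x,y,y] \<simeq> [y,y,x,x]"
  using sub2[OF f2, of "[x]" "[y]"] by simp

lemma add2: assumes "2 \<le> count_list w x" "2 \<le> count_list w y" shows "w \<simeq> w @ [x,y]"
proof -
  have "w \<simeq> w @ [x]" by (rule FIend[OF assms(1)])
  also have "\<dots> \<simeq> (w @ [x]) @ [y]" by (rule FIend) (use assms(2) in simp)
  finally show ?thesis by simp
qed

lemma commA: assumes "x \<in> set q" "y \<in> set q" shows "p @ x # y # q \<simeq> p @ y # x # q"
proof -
  have "p @ x # y # q \<simeq> (p @ x # y # q) @ [x,y]" by (rule add2) (use assms in \<open>simp_all add: Suc_le_eq\<close>)
  also have "\<dots> \<simeq> p @ y # x # q @ [x,y]"
    using rpre[OF Fsw[of x y q], of p] by simp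
  also have "\<dots> = (p @ y # x # q) @ [x,y]" by simp
  also have "\<dots> \<simeq> p @ y # x # q" by (rule rsym, rule add2) (use assms in \<open>simp_all add: Suc_le_eq\<close>)
  finally show ?thesis .
qed

lemma commB: assumes "x \<in> set p" "y \<in> set p" shows "p @ x # y # q \<simeq> p @ y # x # q"
proof -
  have "p @ x # y # q \<simeq> p @ x # x # y # q" by (rule FD[OF assms(1)])
  also have "\<dots> = (p @ [x,x]) @ y # q" by simp
  also have "\<dots> \<simeq> (p @ [x,x]) @ y # y # q" by (rule FD) (use assms in simp)
  also have "\<dots> = p @ [x,x,y,y] @ q" by simp
  also have "\<dots> \<simeq> p @ [y,y,x,x] @ q" by (rule rctx, rule Fsq)
  also have "\<dots> = (p @ [y,y]) @ x # x # q" by simp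
  also have "\<dots> \<simeq> (p @ [y,y]) @ x # q" by (rule rsym, rule FD) (use assms in simp)
  also have "\<dots> = p @ y # y # x # q" by simp
  also have "\<dots> \<simeq> p @ y # x # q" by (rule rsym, rule FD[OF assms(2)])
  finally show ?thesis .
qed

lemma commC: assumes "x \<in> set p" "y \<in> set q" shows "p @ x # y # q \<simeq> p @ y # x # q"
proof -
  have "p @ x # y # q \<simeq> p @ x # x # y # q" by (rule FD[OF assms(1)])
  also have "\<dots> \<simeq> (p @ x # x # y # q) @ [y]"
    by (rule FIend) (use assms in \<open>simp add: Suc_le_eq\<close>)
  also have "\<dots> \<simeq> ((p @ x # x # y # q) @ [y]) @ [x]"
    by (rule FIend) (use assms in \<open>simp add: Suc_le_eq\<close>)
  also have "\<dots> = (p @ [x]) @ ([x,y] @ q @ [y,x]) @ []" by simp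
  also have "\<dots> \<simeq> (p @ [x]) @ ([y,x] @ q @ [y,x]) @ []" by (rule rctx, rule Fsw2)
  also have "\<dots> = ((p @ x # y # x # q) @ [y]) @ [x]" by simp
  also have "\<dots> \<simeq> (p @ x # y # x # q) @ [y]"
    by (rule rsym, rule FIend) (use assms in \<open>simp add: Suc_le_eq\<close>)
  also have "\<dots> \<simeq> p @ x # y # x # q"
    by (rule rsym, rule FIend) (use assms in \<open>simp add: Suc_le_eq\<close>)
  also have "\<dots> \<simeq> p @ y # x # x # q" by (rule commA) (use assms in simp_all)
  also have "\<dots> = (p @ [y]) @ x # x # q" by simp
  also have "\<dots> \<simeq> (p @ [y]) @ x # q" by (rule rsym, rule FD) (use assms in simp)
  finally show ?thesis by simp
qed

lemma comm: assumes "x \<in> set (p @ q)" "y \<in> set (p @ q)" shows "p @ x # y # q \<simeq> p @ y # x # q"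
proof -
  consider "x \<in> set q" "y \<in> set q" | "x \<in> set p" "y \<in> set p" | "x \<in> set p" "y \<in> set q"
    | "x \<in> set q" "y \<in> set p" using assms by auto
  then show ?thesis
  proof cases
    case 1 then show ?thesis by (rule commA)
  next
    case 2 then show ?thesis by (rule commB)
  next
    case 3 then show ?thesis by (rule commC)
  next
    case 4 then show ?thesis using rsym[OF commC[of y p x q]] by simp
  qed
qed

lemma Fmove: "x \<in> set (p @ q) \<Longrightarrow> \<forall>y\<in>set s. 2 \<le> count_list (p @ s @ q) y \<Longrightarrow>
   p @ s @ x # q \<simeq> p @ x # s @ q"
proof (induction s arbitrary: q rule: rev_induct)
  case Nil then show ?case by simp
next
  case (snoc y s)
  have "2 \<le> count_list (p @ (s @ [y]) @ q) y" using snoc.prems(2) by simp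
  moreover have "count_list (p @ (s @ [y]) @ q) y = count_list (p @ s @ q) y + 1" by simp
  ultimately have "0 < count_list (p @ s @ q) y" by linarith
  then have yin: "y \<in> set (p @ s @ q)" by (simp only: count_pos)
  have "p @ (s @ [y]) @ x # q = (p @ s) @ y # x # q" by simp
  also have "\<dots> \<simeq> (p @ s) @ x # y # q" by (rule comm) (use snoc.prems(1) yin in auto)
  also have "\<dots> = p @ s @ x # (y # q)" by simp
  also have "\<dots> \<simeq> p @ x # s @ (y # q)"
  proof (rule snoc.IH)
    show "x \<in> set (p @ y # q)" using snoc.prems(1) by auto
    show "\<forall>z\<in>set s. 2 \<le> count_list (p @ s @ y # q) z" using snoc.prems(2) by simp
  qed
  finally show ?case by simp
qed

lemma tr_eq: "p @ w \<simeq> p @ tr p w"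
proof (induction w arbitrary: p)
  case (Cons x w)
  show ?case
  proof (cases "2 \<le> count_list p x")
    case True
    have "p @ x # w \<simeq> p @ w" by (rule FDel[OF True])
    also have "\<dots> \<simeq> p @ tr p w" by (rule Cons.IH)
    finally show ?thesis using True by simp
  next
    case False
    have "p @ x # w = (p @ [x]) @ w" by simp
    also have "\<dots> \<simeq> (p @ [x]) @ tr (p @ [x]) w" by (rule Cons.IH)
    finally show ?thesis using False by simp
  qed
qed simp

end

definition Pinv :: "word \<Rightarrow> word \<Rightarrow> bool" where
  "Pinv u v \<longleftrightarrow> (\<forall>a. count_list u a \<le> 2) \<and> (\<forall>a. count_list u a = count_list v a) \<and>
     (\<forall>t a. count_list u t = 1 \<longrightarrow> count_list (bef t u) a = count_list (bef t v) a)"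

lemma cnt_bef_le: "count_list (bef t w) a \<le> count_list w a"
  by (induction w) auto

declare count_pos[simp del]

lemma cnt_bef_notin[simp]: "c \<notin> set w \<Longrightarrow> count_list (bef t w) c = 0"
  using set_bef[of t w] by (simp add: count_list_0_iff) blast

context Fth begin

lemma F_main: "Pinv u v \<Longrightarrow> u \<simeq> v"
proof (induction "length u" arbitrary: u v rule: less_induct)
  case less
  have le2: "\<And>a. count_list u a \<le> 2" and ceq: "\<And>a. count_list u a = count_list v a"
    and bq: "\<And>t a. count_list u t = 1 \<Longrightarrow> count_list (bef t u) a = count_list (bef t v) a"
    using less.prems unfolding Pinv_def by blast+
  have setuv: "\<And>a. a \<in> set u \<longleftrightarrow> a \<in> set v" using ceq by (metis count_list_0_iff)
  show ?case
  proof (cases u)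
    case Nil
    then have "v = []" using setuv by (metis empty_iff list.set_intros(1) neq_Nil_conv set_empty)
    then show ?thesis using Nil by simp
  next
    case (Cons c u1)
    show ?thesis
    proof (cases "c \<in> set u1")
      case False
      have cu: "count_list u c = 1" using Cons False by simp
      have "\<And>a. count_list (bef c v) a = 0" using bq[OF cu] Cons by simp
      then have bn: "bef c v = []" by (rule count_zero_Nil)
      have "c \<in> set v" using setuv[of c] Cons by simp
      then obtain v1 where v: "v = c # v1" using bn by (cases v) (auto split: if_splits)
      have cv1: "c \<notin> set v1" using ceq[of c] cu v by (simp add: count_list_0_iff)
      have "Pinv u1 v1" unfolding Pinv_def
      proof (intro conjI allI impI)
        fix a show "count_list u1 a \<le> 2" using le2[of a] Cons by (simp split: if_splits)
        show "count_list u1 a = count_list v1 a" using ceq[of a] Cons v by (simp split: if_splits)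
      next
        fix t a assume t: "count_list u1 t = 1"
        then have "t \<in> set u1" by (metis count_list_0_iff one_neq_zero)
        then have tc: "t \<noteq> c" using False by auto
        then have "count_list u t = 1" using t Cons by simp
        from bq[OF this, of a] show "count_list (bef t u1) a = count_list (bef t v1) a"
          using Cons v tc by (simp split: if_splits)
      qed
      moreover have "length u1 < length u" using Cons by simp
      ultimately have "u1 \<simeq> v1" using less.hyps by blast
      then show ?thesis using Cons v rpre[of u1 v1 "[c]"] by simp
    next
      case True
      have "count_list u1 c \<noteq> 0" using True by (simp add: count_list_0_iff)
      moreover have "count_list u1 c \<le> 1" using le2[of c] Cons by simp
      ultimately have cu1: "count_list u1 c = 1" by linarith
      then have cu: "count_list u c = 2" using Cons by simp
      obtain A B where u1: "u1 = A @ c # B" "c \<notin> set A" using True by (meson split_list_first)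
      have cB: "c \<notin> set B" using cu1 u1 by (simp add: count_list_0_iff[symmetric])
      have cv: "count_list v c = 2" using cu ceq by simp
      then have "c \<in> set v" by (metis count_list_0_iff zero_neq_numeral)
      then obtain V0 Rr where v0: "v = V0 @ c # Rr" "c \<notin> set V0" by (meson split_list_first)
      then have "count_list Rr c = 1" using cv by simp
      then have "c \<in> set Rr" by (metis count_list_0_iff one_neq_zero)
      then obtain V1 V2 where r: "Rr = V1 @ c # V2" "c \<notin> set V1" by (meson split_list_first)
      have cV2: "c \<notin> set V2" using \<open>count_list Rr c = 1\<close> r by (simp add: count_list_0_iff[symmetric])
      have v: "v = V0 @ c # V1 @ c # V2" using v0 r by simp
      have cntv: "\<And>y. y \<noteq> c \<Longrightarrow> count_list v y = count_list V0 y + count_list V1 y + count_list V2 y"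
        using v by simp
      have cntu: "\<And>y. y \<noteq> c \<Longrightarrow> count_list u y = count_list A y + count_list B y"
        using Cons u1 by simp
      have V0nl: "\<forall>y\<in>set V0. 2 \<le> count_list v y"
      proof
        fix y assume y: "y \<in> set V0"
        have yc: "y \<noteq> c" using y v0 by auto
        show "2 \<le> count_list v y"
        proof (rule ccontr)
          assume "\<not> 2 \<le> count_list v y"
          moreover have "0 < count_list v y" using y v by (simp add: count_pos)
          ultimately have "count_list v y = 1" by linarith
          then have cuy: "count_list u y = 1" using ceq by simp
          have "bef y v = bef y V0" using v y by (simp add: bef_append)
          then have "count_list (bef y v) c = 0" using v0(2) set_bef[of y V0] by auto
          moreover have "count_list (bef y u) c \<ge> 1" using Cons yc by simp
          ultimately show False using bq[OF cuy, of c] by simp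
        qed
      qed
      show ?thesis
      proof (cases "\<forall>y\<in>set A. count_list u y \<noteq> 1")
        case True
        have V1nl: "\<forall>y\<in>set V1. 2 \<le> count_list v y"
        proof
          fix y assume y: "y \<in> set V1"
          have yc: "y \<noteq> c" using y r by auto
          show "2 \<le> count_list v y"
          proof (rule ccontr)
            assume "\<not> 2 \<le> count_list v y"
            moreover have "0 < count_list V1 y" using y by (simp add: count_pos)
            ultimately have c1: "count_list v y = 1" using cntv[OF yc] by linarith
            then have "count_list V0 y = 0" using cntv[OF yc] \<open>0 < count_list V1 y\<close> by linarith
            then have yV0: "y \<notin> set V0" by (simp add: count_list_0_iff)
            have cuy: "count_list u y = 1" using ceq c1 by simp
            have "bef y v = V0 @ c # bef y V1" using v y yV0 yc by (simp add: bef_append)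
            then have "count_list (bef y v) c = 1" using v0(2) r(2) set_bef[of y V1] by auto
            moreover have "y \<notin> set A" using True cuy by auto
            then have "y \<in> set B" using cuy cntu[OF yc] by (metis add_0 count_list_0_iff zero_neq_one)
            then have "bef y u = c # A @ c # bef y B" using Cons u1 \<open>y \<notin> set A\<close> yc by (simp add: bef_append)
            then have "count_list (bef y u) c = 2" using u1(2) cB set_bef[of y B] by auto
            ultimately show False using bq[OF cuy, of c] by simp
          qed
        qed
        have Anl: "\<forall>y\<in>set A. 2 \<le> count_list ([c] @ A @ B) y"
        proof
          fix y assume y: "y \<in> set A"
          then have yc: "y \<noteq> c" using u1 by auto
          have "count_list u y \<noteq> 1" "0 < count_list u y" using True y Cons u1 by (auto simp: count_pos)
          then have "2 \<le> count_list u y" by linarith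
          then show "2 \<le> count_list ([c] @ A @ B) y" using cntu[OF yc] yc by simp
        qed
        have 1: "u \<simeq> [c] @ c # A @ B"
          using Fmove[of c "[c]" B A] Anl Cons u1 by simp
        have "v \<simeq> [] @ c # V0 @ (V1 @ c # V2)"
        proof -
          have "\<forall>y\<in>set V0. 2 \<le> count_list ([] @ V0 @ V1 @ c # V2) y"
          proof
            fix y assume y: "y \<in> set V0"
            then have "y \<noteq> c" using v0 by auto
            then show "2 \<le> count_list ([] @ V0 @ V1 @ c # V2) y" using V0nl[rule_format, OF y] v by simp
          qed
          then show ?thesis using Fmove[of c "[]" "V1 @ c # V2" V0] v by simp
        qed
        also have "\<dots> = [c] @ (V0 @ V1) @ c # V2" by simp
        also have "\<dots> \<simeq> [c] @ c # (V0 @ V1) @ V2"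
        proof (rule Fmove)
          show "c \<in> set ([c] @ V2)" by simp
          show "\<forall>y\<in>set (V0 @ V1). 2 \<le> count_list ([c] @ (V0 @ V1) @ V2) y"
          proof
            fix y assume y: "y \<in> set (V0 @ V1)"
            then have yc: "y \<noteq> c" using v0 r by auto
            have "2 \<le> count_list v y" using y V0nl V1nl by auto
            then show "2 \<le> count_list ([c] @ (V0 @ V1) @ V2) y" using cntv[OF yc] yc by simp
          qed
        qed
        finally have 2: "v \<simeq> [c, c] @ (V0 @ V1 @ V2)" by simp
        have "Pinv (A @ B) (V0 @ V1 @ V2)" unfolding Pinv_def
        proof (intro conjI allI impI)
          fix a
          show "count_list (A @ B) a \<le> 2" using le2[of a] Cons u1 by (simp split: if_splits)
          show "count_list (A @ B) a = count_list (V0 @ V1 @ V2) a"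
          proof (cases "a = c")
            case True then show ?thesis using u1 cB v0 r cV2 by simp
          next
            case False then show ?thesis using ceq[of a] cntu cntv by simp
          qed
        next
          fix t a assume t: "count_list (A @ B) t = 1"
          then have "t \<in> set (A @ B)" by (metis count_list_0_iff one_neq_zero)
          then have tc: "t \<noteq> c" using u1 cB by auto
          then have cut: "count_list u t = 1" using t cntu by simp
          then have tA: "t \<notin> set A" using True by auto
          have "count_list v t = 1" using cut ceq by simp
          then have tV: "t \<notin> set V0" "t \<notin> set V1" using V0nl V1nl by auto
          have bu: "bef t u = c # A @ c # bef t B" using Cons u1 tA tc by (simp add: bef_append)
          have bv: "bef t v = V0 @ c # V1 @ c # bef t V2" using v tV tc by (simp add: bef_append)
          have ncb: "c \<notin> set (bef t B)" "c \<notin> set (bef t V2)" using cB cV2 set_bef by blast+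
          have e: "count_list (bef t u) a = count_list (bef t v) a" by (rule bq[OF cut])
          show "count_list (bef t (A @ B)) a = count_list (bef t (V0 @ V1 @ V2)) a"
          proof (cases "a = c")
            case True then show ?thesis using tA tV u1 v0 r ncb by (simp add: bef_append)
          next
            case False then show ?thesis using e bu bv tA tV by (simp add: bef_append)
          qed
        qed
        moreover have "length (A @ B) < length u" using Cons u1 by simp
        ultimately have "A @ B \<simeq> V0 @ V1 @ V2" using less.hyps by blast
        then have "[c,c] @ (A @ B) \<simeq> [c,c] @ (V0 @ V1 @ V2)" by (rule rpre)
        then show ?thesis using rtrans[OF 1 rtrans[OF _ rsym[OF 2]]] by simp
      next
        case False
        then have "\<exists>y\<in>set A. count_list u y = 1" by blast
        then obtain A1 t A2 where A: "A = A1 @ t # A2" "count_list u t = 1"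
          "\<forall>y\<in>set A2. \<not> count_list u y = 1"
          using split_list_last_prop[of A "\<lambda>y. count_list u y = 1"] by blast
        have tc: "t \<noteq> c" using A u1 by auto
        have cntu': "count_list u t = count_list A1 t + 1 + count_list A2 t + count_list B t"
          using Cons u1 A tc by simp
        then have tA1: "t \<notin> set A1" and tA2: "t \<notin> set A2" and tB: "t \<notin> set B"
          using A(2) by (simp_all add: count_list_0_iff[symmetric])
        have A2nl: "\<forall>y\<in>set A2. 2 \<le> count_list (c # A1 @ [t] @ A2 @ B) y"
        proof
          fix y assume y: "y \<in> set A2"
          then have yc: "y \<noteq> c" using u1 A by auto
          have "count_list u y \<noteq> 1" "0 < count_list u y" using A(3) y Cons u1 A by (auto simp: count_pos)
          then have "2 \<le> count_list u y" by linarith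
          moreover have "y \<noteq> t" using y tA2 by auto
          ultimately show "2 \<le> count_list (c # A1 @ [t] @ A2 @ B) y" using Cons u1 A yc by simp
        qed
        have 1: "u \<simeq> (c # A1 @ [t]) @ c # A2 @ B"
          using Fmove[of c "c # A1 @ [t]" B A2] A2nl Cons u1 A by simp
        have cvt: "count_list v t = 1" using A(2) ceq by simp
        have but: "bef t u = c # A1" using Cons u1 A tA1 tc by (simp add: bef_append)
        have bvt1: "count_list (bef t v) c = 1" using bq[OF A(2), of c] but u1 A by simp
        have tV0: "t \<notin> set V0" using V0nl cvt by auto
        have tV1: "t \<in> set V1"
        proof (rule ccontr)
          assume "t \<notin> set V1"
          then have "bef t v = V0 @ c # V1 @ c # bef t V2" using v tV0 tc by (simp add: bef_append)
          then show False using bvt1 by simp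
        qed
        then obtain V1a V1b where V1: "V1 = V1a @ t # V1b" by (meson split_list)
        have "count_list v t = count_list V0 t + count_list V1a t + 1 + count_list V1b t + count_list V2 t"
          using v V1 tc by simp
        then have tV1a: "t \<notin> set V1a" and tV1b: "t \<notin> set V1b" and tV2: "t \<notin> set V2"
          using cvt by (simp_all add: count_list_0_iff[symmetric])
        have bvt: "bef t v = V0 @ c # V1a" using v V1 tV0 tV1a tc by (simp add: bef_append)
        have cV1: "c \<notin> set V1a" "c \<notin> set V1b" using r(2) V1 by auto
        have V1bnl: "\<forall>y\<in>set V1b. 2 \<le> count_list v y"
        proof
          fix y assume y: "y \<in> set V1b"
          have yc: "y \<noteq> c" using y cV1 by auto
          have yt: "y \<noteq> t" using y tV1b by auto
          show "2 \<le> count_list v y"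
          proof (rule ccontr)
            assume "\<not> 2 \<le> count_list v y"
            moreover have "0 < count_list V1b y" using y by (simp add: count_pos)
            moreover have "count_list v y = count_list V0 y + count_list V1a y + count_list V1b y + count_list V2 y"
              using v V1 yc yt by simp
            ultimately have c1: "count_list v y = 1" "count_list V0 y = 0" "count_list V1a y = 0"
              by linarith+
            then have yV: "y \<notin> set V0" "y \<notin> set V1a" by (simp_all add: count_list_0_iff)
            have cuy: "count_list u y = 1" using ceq c1 by simp
            have "bef y v = V0 @ c # V1a @ t # bef y V1b" using v V1 y yV yc yt by (simp add: bef_append)
            then have bv1: "count_list (bef y v) c = 1" "count_list (bef y v) t = 1"
              using v0(2) cV1 set_bef[of y V1b] tV0 tV1a tV1b yt tc by auto
            have "y \<in> set u" using setuv y v V1 by auto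
            then have "y \<in> set A1 \<or> y \<in> set A2 \<or> y \<in> set B" using Cons u1 A yc yt by auto
            moreover have "y \<notin> set A2" using A(3) cuy by auto
            moreover {
              assume yA1: "y \<in> set A1"
              then have "bef y u = c # bef y A1" using Cons u1 A yc by (simp add: bef_append)
              then have "count_list (bef y u) t = 0" using tA1 set_bef[of y A1] tc by auto
              then have False using bq[OF cuy, of t] bv1 by simp }
            moreover {
              assume yB: "y \<in> set B" "y \<notin> set A1" "y \<notin> set A2"
              then have "bef y u = c # A1 @ t # A2 @ c # bef y B" using Cons u1 A yc yt by (simp add: bef_append)
              then have "count_list (bef y u) c = 2" using u1(2) A cB set_bef[of y B] by auto
              then have False using bq[OF cuy, of c] bv1 by simp }
            ultimately show False by blast
          qed
        qed
        have "v \<simeq> [] @ c # V0 @ (V1a @ t # V1b @ c # V2)"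
        proof -
          have "\<forall>y\<in>set V0. 2 \<le> count_list ([] @ V0 @ V1a @ t # V1b @ c # V2) y"
          proof
            fix y assume y: "y \<in> set V0"
            then have "y \<noteq> c" using v0 by auto
            then show "2 \<le> count_list ([] @ V0 @ V1a @ t # V1b @ c # V2) y" using V0nl[rule_format, OF y] v V1 by simp
          qed
          then show ?thesis using Fmove[of c "[]" "V1a @ t # V1b @ c # V2" V0] v V1 by simp
        qed
        also have "\<dots> = (c # V0 @ V1a @ [t]) @ V1b @ c # V2" by simp
        also have "\<dots> \<simeq> (c # V0 @ V1a @ [t]) @ c # V1b @ V2"
        proof (rule Fmove)
          show "c \<in> set ((c # V0 @ V1a @ [t]) @ V2)" by simp
          show "\<forall>y\<in>set V1b. 2 \<le> count_list ((c # V0 @ V1a @ [t]) @ V1b @ V2) y"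
          proof
            fix y assume y: "y \<in> set V1b"
            then have yc: "y \<noteq> c" using cV1 by auto
            have "2 \<le> count_list v y" using y V1bnl by auto
            moreover have "y \<noteq> t" using y tV1b by auto
            ultimately show "2 \<le> count_list ((c # V0 @ V1a @ [t]) @ V1b @ V2) y" using v V1 yc by simp
          qed
        qed
        finally have 2: "v \<simeq> c # (V0 @ V1a @ t # c # V1b @ V2)" by simp
        define u' where "u' = A1 @ t # c # A2 @ B"
        define v' where "v' = V0 @ V1a @ t # c # V1b @ V2"
        have cA1: "c \<notin> set A1" "c \<notin> set A2" using u1(2) A by auto
        have "Pinv u' v'" unfolding Pinv_def
        proof (intro conjI allI impI)
          fix a
          show "count_list u' a \<le> 2" using le2[of a] Cons u1 A unfolding u'_def by (simp split: if_splits)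
          show "count_list u' a = count_list v' a"
            using ceq[of a] Cons u1 A v V1 unfolding u'_def v'_def by (simp split: if_splits)
        next
          fix t' a assume t': "count_list u' t' = 1"
          show "count_list (bef t' u') a = count_list (bef t' v') a"
          proof (cases "t' = c")
            case True
            have "bef c u' = A1 @ [t]" unfolding u'_def using cA1 tc by (simp add: bef_append)
            moreover have "bef c v' = V0 @ V1a @ [t]" unfolding v'_def using v0(2) cV1 tc
              by (simp add: bef_append)
            moreover have "count_list (c # A1) a = count_list (V0 @ c # V1a) a"
              using bq[OF A(2), of a] but bvt by simp
            ultimately show ?thesis using True by (simp split: if_splits)
          next
            case False
            have "count_list u t' = count_list u' t'" using Cons u1 A False unfolding u'_def by simp
            then have cut': "count_list u t' = 1" using t' by simp
            have e: "count_list (bef t' u) a = count_list (bef t' v) a" by (rule bq[OF cut'])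
            have "t' \<in> set u" using cut' by (metis count_list_0_iff one_neq_zero)
            then have tu: "t' \<in> set A1 \<or> t' = t \<or> t' \<in> set A2 \<or> t' \<in> set B" using Cons u1 A False by auto
            have "t' \<notin> set A2" using A(3) cut' by auto
            have eu: "count_list (bef t' u) a = count_list (bef t' u') a + (if a = c then 1 else 0)"
            proof -
              consider "t' \<in> set A1" | "t' = t" | "t' \<in> set B" "t' \<notin> set A1" "t' \<noteq> t"
                using tu \<open>t' \<notin> set A2\<close> by blast
              then show ?thesis
              proof cases
                case 1 then show ?thesis using Cons u1 A False unfolding u'_def by (simp add: bef_append)
              next
                case 2 then show ?thesis using Cons u1 A False tA1 unfolding u'_def by (simp add: bef_append)
              next
                case 3 then show ?thesis using Cons u1 A False \<open>t' \<notin> set A2\<close>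
                  unfolding u'_def by (simp add: bef_append)
              qed
            qed
            have cvt': "count_list v t' = 1" using cut' ceq by simp
            then have "t' \<in> set v" by (metis count_list_0_iff one_neq_zero)
            then have tv: "t' \<in> set V0 \<or> t' \<in> set V1a \<or> t' = t \<or> t' \<in> set V1b \<or> t' \<in> set V2"
              using v V1 False by auto
            have nV: "t' \<notin> set V0" "t' \<notin> set V1b" using V0nl V1bnl cvt' by auto
            have ev: "count_list (bef t' v) a = count_list (bef t' v') a + (if a = c then 1 else 0)"
            proof -
              consider "t' \<in> set V1a" | "t' = t" | "t' \<in> set V2" "t' \<notin> set V1a" "t' \<noteq> t"
                using tv nV by blast
              then show ?thesis
              proof cases
                case 1 then show ?thesis using v V1 False nV unfolding v'_def by (simp add: bef_append)
              next
                case 2 then show ?thesis using v V1 False nV tV1a unfolding v'_def by (simp add: bef_append)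
              next
                case 3 then show ?thesis using v V1 False nV unfolding v'_def by (simp add: bef_append)
              qed
            qed
            show ?thesis using e eu ev by simp
          qed
        qed
        moreover have "length u' < length u" using Cons u1 A unfolding u'_def by simp
        ultimately have "u' \<simeq> v'" using less.hyps by blast
        then have "[c] @ u' \<simeq> [c] @ v'" by (rule rpre)
        then show ?thesis using rtrans[OF 1 rtrans[OF _ rsym[OF 2]]] unfolding u'_def v'_def by simp
      qed
    qed
  qed
qed

end

context Fth begin
lemma F_full: assumes "invF u v" shows "u \<simeq> v"
proof -
  have ct: "\<And>w a. count_list (tr [] w) a = min (count_list w a) 2" by (simp add: count_tr)
  have m: "\<And>a. min (count_list u a) 2 = min (count_list v a) 2"
    and b: "\<And>t a. count_list u t = 1 \<Longrightarrow> min (count_list (bef t u) a) 2 = min (count_list (bef t v) a) 2"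
    using assms unfolding invF_def by blast+
  have "Pinv (tr [] u) (tr [] v)" unfolding Pinv_def
  proof (intro conjI allI impI)
    fix a
    show "count_list (tr [] u) a \<le> 2" by (simp add: ct)
    show "count_list (tr [] u) a = count_list (tr [] v) a" using m[of a] by (simp add: ct)
  next
    fix t a assume t: "count_list (tr [] u) t = 1"
    then have ut: "count_list u t = 1" by (simp add: ct min_def split: if_splits)
    then have vt: "count_list v t = 1" using min2_1[OF m[of t]] by blast
    show "count_list (bef t (tr [] u)) a = count_list (bef t (tr [] v)) a"
      using b[OF ut, of a] by (simp add: bef_tr[OF ut] bef_tr[OF vt] ct)
  qed
  then have "tr [] u \<simeq> tr [] v" by (rule F_main)
  moreover have "u \<simeq> tr [] u" "v \<simeq> tr [] v" using tr_eq[of "[]"] by simp_all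
  ultimately show ?thesis using rtrans rsym by metis
qed
end

lemma lemma2p3_aux:
  fixes V :: "(word \<times> word) set"
  assumes "is_variety V"
    and "satisfies V [vx,vy,vx] [vx,vy,vx,vx]"
    and "satisfies V [vx,vx,vy,vy] [vy,vy,vx,vx]"
  shows "(\<not> subvariety varE V \<longrightarrow> subvariety V varK)
       \<and> (\<not> subvariety varF V \<longrightarrow> subvariety V varQ)"
proof -
  have clV: "eq_cl V = V" using assms(1) unfolding is_variety_def .
  have h1: "([0,1,0],[0,1,0,0]) \<in> V" and h2: "([0,0,1,1],[1,1,0,0]) \<in> V"
    using assms(2,3) unfolding satisfies_def by simp_all
  have D: "dvar V" by (unfold_locales) (use clV h1 h2 in simp_all)
  have E: "Eth (eq_cl E_ids)"
    by (unfold_locales) (auto simp: eq_cl_closed E_ids_def intro: eq_cl.base)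
  have F: "Fth (eq_cl F_ids)"
    by (unfold_locales) (auto simp: eq_cl_closed F_ids_def intro: eq_cl.base)
  have qV: "eqth V" by unfold_locales (rule clV)
  have qE: "eqth (eq_cl E_ids)" by unfold_locales (rule eq_cl_closed)
  have qF: "eqth (eq_cl F_ids)" by unfold_locales (rule eq_cl_closed)
  show ?thesis
  proof (intro conjI impI)
    assume "\<not> subvariety varE V"
    then obtain u v where uv: "(u, v) \<in> V" "(u, v) \<notin> eq_cl E_ids"
      unfolding subvariety_def varE_def var_def_by_def by auto
    have "\<not> invE u v"
    proof
      assume "invE u v"
      then have "eqth.eqv (eq_cl E_ids) u v" using Eth.E_main[OF E] by blast
      then show False using uv(2) by (simp add: eqth.eqv_def[OF qE])
    qed
    then have "eqth.eqv V [0,0,1] [0,0,1,0]"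
      using dvar.VE[OF D] uv(1) by (simp add: eqth.eqv_def[OF qV])
    then have T: "([0,0,1],[0,0,1,0]) \<in> V" by (simp add: eqth.eqv_def[OF qV])
    have "K_ids \<subseteq> V" using h1 h2 T unfolding K_ids_def by auto
    then have "eq_cl K_ids \<subseteq> V" using eq_cl_mono_closed[OF _ _ clV] by auto
    then show "subvariety V varK" unfolding subvariety_def varK_def var_def_by_def .
  next
    assume "\<not> subvariety varF V"
    then obtain u v where uv: "(u, v) \<in> V" "(u, v) \<notin> eq_cl F_ids"
      unfolding subvariety_def varF_def var_def_by_def by auto
    have "\<not> invF u v"
    proof
      assume "invF u v"
      then have "eqth.eqv (eq_cl F_ids) u v" using Fth.F_full[OF F] by blast
      then show False using uv(2) by (simp add: eqth.eqv_def[OF qF])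
    qed
    then have "eqth.eqv V [0,1,0] [0,0,1,0]"
      using dvar.VF[OF D] uv(1) by (simp add: eqth.eqv_def[OF qV])
    then have T: "([0,1,0],[0,0,1,0]) \<in> V" by (simp add: eqth.eqv_def[OF qV])
    have "Q_ids \<subseteq> V" using h1 h2 T unfolding Q_ids_def by auto
    then have "eq_cl Q_ids \<subseteq> V" using eq_cl_mono_closed[OF _ _ clV] by auto
    then show "subvariety V varQ" unfolding subvariety_def varQ_def var_def_by_def .
  qed
qed

theorem lemma2p3:
  fixes V :: "(word \<times> word) set"
  assumes "is_variety V"
    and "satisfies V [vx,vy,vx] [vx,vy,vx,vx]"
    and "satisfies V [vx,vx,vy,vy] [vy,vy,vx,vx]"
  shows "(\<not> subvariety varE V \<longrightarrow> subvariety V varK)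
       \<and> (\<not> subvariety varF V \<longrightarrow> subvariety V varQ)"
  using lemma2p3_aux[OF assms] .

end
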